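(* Let $\mathcal T$ be a theory of $\mathsf{LGIM}$, let $\alpha_1,\dots,\alpha_n,\beta$ be basic expressions ($n\ge1$) and $c_1,\dots,c_n,d\in[0,1]$, and assume that every element of $\tau(\alpha_1,c_1),\dots,\tau(\alpha_n,c_n)$ and of $\tau(\beta,d)$ is provable from $\mathcal T$ in $\mathsf{LGIM}$. Then for $r\in[0,1]$: if $r<1-\mathrm{avg}(c_1,\dots,c_n)+d$ then $\mathcal T\vdash_{\mathsf{LGIM}}\alpha_1,\dots,\alpha_n\Rightarrow_r\beta$, and if $r>1-\mathrm{avg}(c_1,\dots,c_n)+d$ then $\mathcal T\vdash_{\mathsf{LGIM}}\lnot(\alpha_1,\dots,\alpha_n\Rightarrow_r\beta)$.
   Context: Fix a continuous t-norm $\odot$ on $[0,1]$ and let $c\oplus d = 1-((1-c)\odot(1-d))$. Write $c\odot_{\L} d=\max(c+d-1,0)$, $c\oplus_{\L} d=\min(c+d,1)$, and $\mathrm{avg}(r_1,\dots,r_n)=(r_1+\dots+r_n)/n$. Basic expressions: built from countably many variables $\phi_0,\phi_1,\dots$ and constants $\bot,\top$ by binary $\land,\lor,\odot$ and unary $\sim$. A generalised graded implication is written $\alpha_1,\dots,\alpha_n\Rightarrow_c\beta$ where $n\ge1$, $\alpha_1,\dots,\alpha_n$ is a multiset of basic expressions, $\beta$ a basic expression, $c\in[0,1]$; for $n=1$ it is a graded implication $\alpha\Rightarrow_c\beta$. Formulas of $\mathsf{LGIM}$ are built from generalised graded implications by classical $\land,\lor,\lnot$; $\Phi\to\Psi$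 abbreviates $\lnot\Phi\lor\Psi$. A theory is a set of formulas. For a basic expression $\alpha$ and $c\in[0,1]$, $\tau(\alpha,c)=\{\top\Rightarrow_t\alpha : t\in[0,1],\ t<c\}\cup\{\alpha\Rightarrow_{1-t}\bot : t\in[0,1],\ t>c\}$. Calculus $\mathsf{LGIM}$: axioms are (i) all substitution instances (by generalised graded implications) of classical propositional tautologies; (ii) for all basic expressions $\alpha,\beta,\gamma$ and $c,d\in[0,1]$: ($\land_1$) $(\alpha\Rightarrow_d\beta)\land(\alpha\Rightarrow_d\gamma)\to(\alpha\Rightarrow_d\beta\land\gamma)$; ($\land_2$) $\alpha\land\beta\Rightarrow_1\alpha$; ($\land_3$) $\alpha\land\beta\Rightarrow_1\beta$; ($\lor_1$) $(\alpha\Rightarrow_d\gamma)\land(\beta\Rightarrow_d\gamma)\to(\alpha\lor\beta\Rightarrow_d\gamma)$; ($\lor_2$) $\alpha\Rightarrow_1\alpha\lor\beta$; ($\lor_3$) $\beta\Rightarrow_1\alpha\lor\beta$; ($\odot_1$) $(\top\Rightarrow_c\alpha)\land(\top\Rightarrow_d\beta)\to(\top\Rightarrow_{c\odot d}\alpha\odot\beta)$; ($\odot_2$) $(\alpha\Rightarrow_c\bot)\land(\beta\Rightarrow_d\bot)\to(\alpha\odot\beta\Rightarrow_{c\oplus d}\bot)$; ($\odot_3$) $\top\Rightarrow_1\top\odot\top$; ($\sim_1$) $(\alpha\Rightarrow_d\beta)\to(\sim\beta\Rightarrow_d\sim\alpha)$; ($\sim_2$) $\sim\sim\alpha\Rightarrow_1\alpha$;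 ($\sim_3$) $\alpha\Rightarrow_1\sim\sim\alpha$; ($\top$) $\alpha\Rightarrow_1\top$; ($\bot$) $\bot\Rightarrow_1\alpha$; (0) $\alpha\Rightarrow_0\beta$; ($c$) $\alpha\Rightarrow_c\alpha$; (inkons) $\lnot(\top\Rightarrow_c\bot)$ for $c>0$; (trans$_1$) $(\alpha\Rightarrow_c\beta)\land(\beta\Rightarrow_d\gamma)\to(\alpha\Rightarrow_{c\odot_{\L}d}\gamma)$; (trans$_2$) $(\alpha\Rightarrow_c\bot)\land(\top\Rightarrow_d\beta)\to(\alpha\Rightarrow_{c\oplus_{\L}d}\beta)$; (lin$_1$) $(\alpha\Rightarrow_1\beta)\lor(\beta\Rightarrow_1\alpha)$; (lin$_2$) $(\top\Rightarrow_d\alpha)\lor(\alpha\Rightarrow_{1-d}\bot)$; (iii) for all basic expressions $\alpha,\alpha_i,\beta_i,\beta,\gamma$ and $c,c_i,d\in[0,1]$: (trans$\varnothing_1$) $(\alpha_1\Rightarrow_{c_1}\beta_1)\land\dots\land(\alpha_n\Rightarrow_{c_n}\beta_n)\land(\beta_1,\dots,\beta_n\Rightarrow_d\gamma)\to(\alpha_1,\dots,\alpha_n\Rightarrow_{\mathrm{avg}(c_1,\dots,c_n)\odot_{\L}d}\gamma)$; (trans$\varnothing_2$) $(\alpha_1,\dots,\alpha_n\Rightarrow_c\beta)\land(\beta\Rightarrow_d\gamma)\to(\alpha_1,\dots,\alpha_n\Rightarrow_{c\odot_{\L}d}\gamma)$; (trans$\varnothing_3$) $(\alpha_1\Rightarrow_{c_1}\bot)\land\dots\land(\alpha_n\Rightarrow_{c_n}\bot)\land(\top\Rightarrow_d\beta)\to(\alpha_1,\dots,\alpha_n\Rightarrow_{\mathrm{avg}(c_1,\dots,c_n)\oplus_{\L}d}\beta)$;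 ($\top\varnothing$) $(\top,\dots,\top\Rightarrow_c\alpha)\to(\top\Rightarrow_c\alpha)$. The only rule is modus ponens. $\mathcal T\vdash_{\mathsf{LGIM}}\Phi$ means $\Phi$ has a finite derivation from axioms and elements of $\mathcal T$ by modus ponens. *)

theory Defs
  imports "HOL-Analysis.Analysis" "HOL-Library.Multiset"
begin

definition cont_tnorm :: "(real \<Rightarrow> real \<Rightarrow> real) \<Rightarrow> bool" where
  "cont_tnorm tn \<longleftrightarrow>
     (\<forall>x\<in>{0..1}. \<forall>y\<in>{0..1}. tn x y \<in> {0..1}) \<and>
     (\<forall>x\<in>{0..1}. \<forall>y\<in>{0..1}. tn x y = tn y x) \<and>
     (\<forall>x\<in>{0..1}. \<forall>y\<in>{0..1}. \<forall>z\<in>{0..1}. tn (tn x y) z = tn x (tn y z)) \<and>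
     (\<forall>x\<in>{0..1}. \<forall>y\<in>{0..1}. \<forall>z\<in>{0..1}. y \<le> z \<longrightarrow> tn x y \<le> tn x z) \<and>
     (\<forall>x\<in>{0..1}. tn x 1 = x) \<and>
     continuous_on ({0..1} \<times> {0..1}) (\<lambda>(x, y). tn x y)"

definition tconorm :: "(real \<Rightarrow> real \<Rightarrow> real) \<Rightarrow> real \<Rightarrow> real \<Rightarrow> real" where
  "tconorm tn c d = 1 - tn (1 - c) (1 - d)"

definition luk_t :: "real \<Rightarrow> real \<Rightarrow> real" where
  "luk_t c d = max (c + d - 1) 0"

definition luk_s :: "real \<Rightarrow> real \<Rightarrow> real" where
  "luk_s c d = min (c + d) 1"

definition avg :: "real list \<Rightarrow> real" where
  "avg cs = sum_list cs / real (length cs)"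

datatype bexp = Var nat | Bot | Top | And bexp bexp | Or bexp bexp | Odot bexp bexp | Neg bexp

text \<open>Formulas: generalised graded implications (multiset of antecedents, consequent, grade)
  combined by classical connectives.\<close>
datatype form = GI "bexp multiset" bexp real | FAnd form form | FOr form form | FNot form

definition Imp :: "form \<Rightarrow> form \<Rightarrow> form" where
  "Imp P Q = FOr (FNot P) Q"

abbreviation gimp :: "bexp \<Rightarrow> real \<Rightarrow> bexp \<Rightarrow> form" where
  "gimp a c b \<equiv> GI {#a#} b c"

fun wf :: "form \<Rightarrow> bool" where
  "wf (GI A b c) \<longleftrightarrow> A \<noteq> {#} \<and> 0 \<le> c \<and> c \<le> 1"
| "wf (FAnd P Q) \<longleftrightarrow> wf P \<and> wf Q"
| "wf (FOr P Q) \<longleftrightarrow> wf P \<and> wf Q"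
| "wf (FNot P) \<longleftrightarrow> wf P"

fun feval :: "(bexp multiset \<Rightarrow> bexp \<Rightarrow> real \<Rightarrow> bool) \<Rightarrow> form \<Rightarrow> bool" where
  "feval v (GI A b c) = v A b c"
| "feval v (FAnd P Q) = (feval v P \<and> feval v Q)"
| "feval v (FOr P Q) = (feval v P \<or> feval v Q)"
| "feval v (FNot P) = (\<not> feval v P)"

text \<open>Substitution instances of classical tautologies = formulas true under every
  valuation of their atoms.\<close>
definition taut_inst :: "form \<Rightarrow> bool" where
  "taut_inst P \<longleftrightarrow> wf P \<and> (\<forall>v. feval v P)"

fun conjs :: "form list \<Rightarrow> form" where
  "conjs [] = undefined"
| "conjs [x] = x"
| "conjs (x # y # xs) = FAnd x (conjs (y # xs))"

abbreviation unit_iv :: "real \<Rightarrow> bool" where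
  "unit_iv c \<equiv> 0 \<le> c \<and> c \<le> 1"

inductive ax :: "(real \<Rightarrow> real \<Rightarrow> real) \<Rightarrow> form \<Rightarrow> bool" for tn where
  taut: "taut_inst P \<Longrightarrow> ax tn P"
| and1: "unit_iv d \<Longrightarrow> ax tn (Imp (FAnd (gimp a d b) (gimp a d g)) (gimp a d (And b g)))"
| and2: "ax tn (gimp (And a b) 1 a)"
| and3: "ax tn (gimp (And a b) 1 b)"
| or1: "unit_iv d \<Longrightarrow> ax tn (Imp (FAnd (gimp a d g) (gimp b d g)) (gimp (Or a b) d g))"
| or2: "ax tn (gimp a 1 (Or a b))"
| or3: "ax tn (gimp b 1 (Or a b))"
| odot1: "unit_iv c \<Longrightarrow> unit_iv d \<Longrightarrow>
    ax tn (Imp (FAnd (gimp Top c a) (gimp Top d b)) (gimp Top (tn c d) (Odot a b)))"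
| odot2: "unit_iv c \<Longrightarrow> unit_iv d \<Longrightarrow>
    ax tn (Imp (FAnd (gimp a c Bot) (gimp b d Bot)) (gimp (Odot a b) (tconorm tn c d) Bot))"
| odot3: "ax tn (gimp Top 1 (Odot Top Top))"
| neg1: "unit_iv d \<Longrightarrow> ax tn (Imp (gimp a d b) (gimp (Neg b) d (Neg a)))"
| neg2: "ax tn (gimp (Neg (Neg a)) 1 a)"
| neg3: "ax tn (gimp a 1 (Neg (Neg a)))"
| top: "ax tn (gimp a 1 Top)"
| bot: "ax tn (gimp Bot 1 a)"
| zero: "ax tn (gimp a 0 b)"
| refl: "unit_iv c \<Longrightarrow> ax tn (gimp a c a)"
| inkons: "0 < c \<Longrightarrow> c \<le> 1 \<Longrightarrow> ax tn (FNot (gimp Top c Bot))"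
| trans1: "unit_iv c \<Longrightarrow> unit_iv d \<Longrightarrow>
    ax tn (Imp (FAnd (gimp a c b) (gimp b d g)) (gimp a (luk_t c d) g))"
| trans2: "unit_iv c \<Longrightarrow> unit_iv d \<Longrightarrow>
    ax tn (Imp (FAnd (gimp a c Bot) (gimp Top d b)) (gimp a (luk_s c d) b))"
| lin1: "ax tn (FOr (gimp a 1 b) (gimp b 1 a))"
| lin2: "unit_iv d \<Longrightarrow> ax tn (FOr (gimp Top d a) (gimp a (1 - d) Bot))"
| transM1: "as \<noteq> [] \<Longrightarrow> length bs = length as \<Longrightarrow> length cs = length as \<Longrightarrow>
    \<forall>c\<in>set cs. unit_iv c \<Longrightarrow> unit_iv d \<Longrightarrow>
    ax tn (Imp (conjs (map (\<lambda>i. gimp (as ! i) (cs ! i) (bs ! i)) [0..<length as]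
                        @ [GI (mset bs) g d]))
               (GI (mset as) g (luk_t (avg cs) d)))"
| transM2: "as \<noteq> [] \<Longrightarrow> unit_iv c \<Longrightarrow> unit_iv d \<Longrightarrow>
    ax tn (Imp (FAnd (GI (mset as) b c) (gimp b d g)) (GI (mset as) g (luk_t c d)))"
| transM3: "as \<noteq> [] \<Longrightarrow> length cs = length as \<Longrightarrow>
    \<forall>c\<in>set cs. unit_iv c \<Longrightarrow> unit_iv d \<Longrightarrow>
    ax tn (Imp (conjs (map (\<lambda>i. gimp (as ! i) (cs ! i) Bot) [0..<length as]
                        @ [gimp Top d b]))
               (GI (mset as) b (luk_s (avg cs) d)))"
| topM: "n \<ge> 1 \<Longrightarrow> unit_iv c \<Longrightarrow>
    ax tn (Imp (GI (replicate_mset n Top) a c) (gimp Top c a))"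

inductive deriv :: "(real \<Rightarrow> real \<Rightarrow> real) \<Rightarrow> form set \<Rightarrow> form \<Rightarrow> bool" for tn T where
  axiom: "ax tn P \<Longrightarrow> deriv tn T P"
| hyp: "P \<in> T \<Longrightarrow> deriv tn T P"
| mp: "deriv tn T (Imp P Q) \<Longrightarrow> deriv tn T P \<Longrightarrow> deriv tn T Q"

definition tau :: "bexp \<Rightarrow> real \<Rightarrow> form set" where
  "tau a c = {gimp Top t a | t. 0 \<le> t \<and> t \<le> 1 \<and> t < c}
           \<union> {gimp a (1 - t) Bot | t. 0 \<le> t \<and> t \<le> 1 \<and> t > c}"

end

theory Submission
  imports Defs
begin

lemma feval_Imp[simp]: "feval v (Imp P Q) = (\<not> feval v P \<or> feval v Q)"
  by (simp add: Imp_def)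

lemma wf_Imp[simp]: "wf (Imp P Q) = (wf P \<and> wf Q)"
  by (simp add: Imp_def)

lemma feval_conjs: "xs \<noteq> [] \<Longrightarrow> feval v (conjs xs) = (\<forall>P\<in>set xs. feval v P)"
  by (induction xs rule: conjs.induct) auto

lemma wf_conjs: "xs \<noteq> [] \<Longrightarrow> wf (conjs xs) = (\<forall>P\<in>set xs. wf P)"
  by (induction xs rule: conjs.induct) auto

lemma taut_mp: "deriv tn T X \<Longrightarrow> taut_inst (Imp X Q) \<Longrightarrow> deriv tn T Q"
  by (meson deriv.axiom deriv.mp ax.taut)

lemma conj_deriv:
  "xs \<noteq> [] \<Longrightarrow> \<forall>P\<in>set xs. deriv tn T P \<and> wf P \<Longrightarrow> deriv tn T (conjs xs)"
proof (induction xs rule: conjs.induct)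
  case 1 then show ?case by simp
next
  case (2 x) then show ?case by simp
next
  case (3 x y xs)
  have d1: "deriv tn T (conjs (y # xs))" using 3 by auto
  have w: "wf (conjs (y # xs))" using 3 wf_conjs[of "y#xs"] by auto
  have "taut_inst (Imp x (Imp (conjs (y # xs)) (FAnd x (conjs (y # xs)))))"
    using 3 w unfolding taut_inst_def by auto
  then have "deriv tn T (Imp (conjs (y # xs)) (FAnd x (conjs (y # xs))))"
    using taut_mp 3 by auto
  then show ?case using d1 deriv.mp by auto
qed

lemma sum_list_scale: "sum_list (map (\<lambda>c. m * c) cs) = m * sum_list (cs::real list)"
  by (induction cs) (auto simp: algebra_simps)

lemma sum_list_aff: "sum_list (map (\<lambda>c. m * (1 - c)) cs) = m * (real (length cs) - sum_list (cs::real list))"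
  by (induction cs) (auto simp: algebra_simps)

lemma avg_scale: "avg (map (\<lambda>c. m * c) cs) = m * avg cs"
  by (simp add: avg_def sum_list_scale)

lemma avg_aff: "cs \<noteq> [] \<Longrightarrow> avg (map (\<lambda>c. m * (1 - c)) cs) = m * (1 - avg cs)"
proof -
  assume "cs \<noteq> []"
  then have "real (length cs) \<noteq> 0" by simp
  then show ?thesis unfolding avg_def length_map sum_list_aff
    by (simp add: field_simps)
qed

lemma sum_list_le_len: "\<forall>c\<in>set cs. c \<le> (1::real) \<Longrightarrow> sum_list cs \<le> real (length cs)"
  by (induction cs) auto

lemma avg_bounds: "cs \<noteq> [] \<Longrightarrow> \<forall>c\<in>set cs. 0 \<le> c \<and> c \<le> (1::real) \<Longrightarrow> 0 \<le> avg cs \<and> avg cs \<le> 1"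
proof -
  assume a: "cs \<noteq> []" "\<forall>c\<in>set cs. 0 \<le> c \<and> c \<le> (1::real)"
  have "0 \<le> sum_list cs" using a by (simp add: sum_list_nonneg)
  moreover have "sum_list cs \<le> real (length cs)" using a sum_list_le_len by auto
  moreover have "real (length cs) > 0" using a by simp
  ultimately show ?thesis by (simp add: avg_def divide_le_eq_1)
qed

lemma tau_top: "0\<le>t \<Longrightarrow> t\<le>1 \<Longrightarrow> t<c \<Longrightarrow> gimp Top t a \<in> tau a c"
  unfolding tau_def by blast

lemma tau_bot: "0\<le>t \<Longrightarrow> t\<le>1 \<Longrightarrow> c<t \<Longrightarrow> gimp a (1-t) Bot \<in> tau a c"
  unfolding tau_def by blast

theorem mainTheorem8:
  fixes tn :: "real \<Rightarrow> real \<Rightarrow> real" and T :: "form set"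
    and as :: "bexp list" and cs :: "real list" and b :: bexp and d r :: real
  assumes "cont_tnorm tn"
    and "\<forall>P\<in>T. wf P"
    and "as \<noteq> []" and "length cs = length as"
    and "\<forall>c\<in>set cs. 0 \<le> c \<and> c \<le> 1" and "0 \<le> d" and "d \<le> 1"
    and "\<forall>i<length as. \<forall>P\<in>tau (as ! i) (cs ! i). deriv tn T P"
    and "\<forall>P\<in>tau b d. deriv tn T P"
    and "0 \<le> r" and "r \<le> 1"
  shows "(r < 1 - avg cs + d \<longrightarrow> deriv tn T (GI (mset as) b r))
       \<and> (r > 1 - avg cs + d \<longrightarrow> deriv tn T (FNot (GI (mset as) b r)))"
proof (intro conjI impI)
  define n where "n = length as"
  define S where "S = 1 - avg cs + d"
  have csne: "cs \<noteq> []" using assms(3,4) by auto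
  have avgb: "0 \<le> avg cs" "avg cs \<le> 1" using avg_bounds[OF csne assms(5)] by auto
  have csi: "\<And>i. i < n \<Longrightarrow> 0 \<le> cs ! i \<and> cs ! i \<le> 1"
    using assms(4,5) n_def nth_mem by metis
  {
    assume rS: "r < 1 - avg cs + d"
    define l where "l = r / S"
    have Spos: "S > 0" using rS assms(10) S_def by auto
    have l0: "0 \<le> l" and l1: "l < 1" using Spos rS assms(10) S_def l_def by auto
    define cs' where "cs' = map (\<lambda>c. l * (1 - c)) cs"
    define d' where "d' = l * d"
    have cs'i: "\<And>i. i < n \<Longrightarrow> cs' ! i = l * (1 - cs ! i)"
      using cs'_def assms(4) n_def by auto
    have cs'u: "\<forall>c\<in>set cs'. unit_iv c"
    proof
      fix c assume "c \<in> set cs'"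
      then obtain c0 where c0: "c0 \<in> set cs" "c = l * (1 - c0)" unfolding cs'_def by auto
      then have "0 \<le> 1 - c0" "1 - c0 \<le> 1" using assms(5) by auto
      then show "unit_iv c" using c0(2) l0 l1 by (simp add: mult_le_one)
    qed
    have d'u: "unit_iv d'" using l0 l1 assms(6,7) d'_def
      by (simp add: mult_le_one)
    have "avg cs' + d' = l * S" unfolding cs'_def d'_def avg_aff[OF csne] S_def
      by (simp add: algebra_simps)
    also have "\<dots> = r" unfolding l_def using Spos by simp
    finally have sum: "luk_s (avg cs') d' = r" using assms(11) by (simp add: luk_s_def)
    have Ei: "deriv tn T (gimp (as ! i) (cs' ! i) Bot)" if i: "i < n" for i
    proof (cases "cs ! i = 1")
      case True
      then show ?thesis using cs'i[OF i] deriv.axiom ax.zero by auto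
    next
      case False
      have c: "0 \<le> cs ! i" "cs ! i < 1" using csi[OF i] False by auto
      define t where "t = 1 - l * (1 - cs ! i)"
      have p: "0 < 1 - cs ! i" "1 - cs ! i \<le> 1" using c by auto
      have "l * (1 - cs ! i) < 1 - cs ! i" using p l1 by simp
      moreover have "l * (1 - cs ! i) \<le> 1" using p l0 l1 by (simp add: mult_le_one)
      moreover have "0 \<le> l * (1 - cs ! i)" using p l0 by simp
      ultimately have "0 \<le> t" "t \<le> 1" "cs ! i < t" unfolding t_def by auto
      then have "gimp (as ! i) (1 - t) Bot \<in> tau (as ! i) (cs ! i)" by (rule tau_bot)
      moreover have "1 - t = cs' ! i" using cs'i[OF i] t_def by simp
      ultimately show ?thesis using assms(8) i n_def by auto
    qed
    have F: "deriv tn T (gimp Top d' b)"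
    proof (cases "d = 0")
      case True then show ?thesis using d'_def deriv.axiom ax.zero by auto
    next
      case False
      have "gimp Top d' b \<in> tau b d"
        apply (rule tau_top) using d'u False assms(6) l1 d'_def by auto
      then show ?thesis using assms(9) by auto
    qed
    have lcs': "length cs' = length as" using cs'_def assms(4) by simp
    have ax3: "deriv tn T (Imp (conjs (map (\<lambda>i. gimp (as ! i) (cs' ! i) Bot) [0..<length as]
                        @ [gimp Top d' b])) (GI (mset as) b (luk_s (avg cs') d')))"
      by (rule deriv.axiom, rule ax.transM3) (use assms(3) lcs' cs'u d'u in auto)
    have "deriv tn T (conjs (map (\<lambda>i. gimp (as ! i) (cs' ! i) Bot) [0..<length as]
                        @ [gimp Top d' b]))"
      apply (rule conj_deriv)
      using Ei F cs'u d'u lcs' n_def by (auto simp: nth_mem)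
    then show "deriv tn T (GI (mset as) b r)" using ax3 sum deriv.mp by metis
  }
  {
    assume rS: "r > 1 - avg cs + d"
    define m where "m = (4 - r - S) / (2 * (2 - S))"
    have S2: "2 - S > 0" using rS assms(11) S_def by auto
    have m0: "0 \<le> m" using S2 assms(11) rS S_def m_def by auto
    have mS': "m * (2 - S) = (4 - r - S) / 2" using S2 unfolding m_def by (simp add: field_simps)
    have rS': "S < r" using rS S_def by simp
    have mS: "m * (2 - S) > 2 - r" using mS' rS' by simp
    have "m * (2 - S) < 1 * (2 - S)" using mS' rS' by simp
    then have m1: "m < 1" using S2 by (simp only: mult_less_cancel_right)
    define ts where "ts = map (\<lambda>c. m * c) cs"
    define g where "g = m * (1 - d)"
    define H where "H = GI (mset as) b r"
    define D where "D = (\<lambda>i. gimp (replicate n Top ! i) (ts ! i) (as ! i))"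
    have tsi: "\<And>i. i < n \<Longrightarrow> ts ! i = m * cs ! i"
      using ts_def assms(4) n_def by auto
    have tsu: "\<forall>c\<in>set ts. unit_iv c"
      using assms(5) m0 m1 unfolding ts_def by (auto simp: mult_le_one)
    have gu: "unit_iv g" using m0 m1 assms(6,7) g_def by (simp add: mult_le_one)
    have ats: "avg ts = m * avg cs" using ts_def avg_scale by simp
    have atsu: "unit_iv (avg ts)" using avg_bounds[of ts] tsu csne ts_def by auto
    have Di: "deriv tn T (D i)" if i: "i < n" for i
    proof -
      have D: "D i = gimp Top (m * cs ! i) (as ! i)" using D_def tsi[OF i] i by simp
      show ?thesis
      proof (cases "cs ! i = 0")
        case True then show ?thesis using D deriv.axiom ax.zero by auto
      next
        case False
        have "gimp Top (m * cs ! i) (as ! i) \<in> tau (as ! i) (cs ! i)"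
          apply (rule tau_top) using csi[OF i] False m0 m1
          by (auto simp: mult_le_one)
        then show ?thesis using D assms(8) i n_def by auto
      qed
    qed
    have Dw: "wf (D i)" if "i < n" for i
    proof -
      have "i < length ts" using that n_def assms(4) ts_def by simp
      then have "ts ! i \<in> set ts" by (rule nth_mem)
      then have "unit_iv (ts ! i)" using tsu by blast
      then show ?thesis unfolding D_def by simp
    qed
    have Z: "deriv tn T (gimp b g Bot)"
    proof (cases "d = 1")
      case True then show ?thesis using g_def deriv.axiom ax.zero by auto
    next
      case False
      define t where "t = 1 - g"
      have g1: "g < 1 - d" unfolding g_def using False assms(7) m1 by simp
      have "gimp b (1 - t) Bot \<in> tau b d"
        apply (rule tau_bot) using gu g1 unfolding t_def by auto
      then show ?thesis using assms(9) t_def by auto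
    qed
    define x where "x = luk_t (avg ts) r"
    define e where "e = luk_t x g"
    have xu: "unit_iv x" using atsu assms(10,11) x_def by (auto simp: luk_t_def)
    have eu: "unit_iv e" using xu gu e_def by (auto simp: luk_t_def)
    have epos: "e > 0"
    proof -
      have "x \<ge> avg ts + r - 1" using x_def luk_t_def by simp
      then have "x + g - 1 > 0" using ats g_def mS S_def by (simp add: algebra_simps)
      then show ?thesis using e_def luk_t_def by simp
    qed
    have nne: "n \<ge> 1" using assms(3) n_def by (cases as) auto
    have mrep: "mset (replicate n Top) = replicate_mset n Top" by simp
    define A where "A = conjs (map D [0..<n] @ [H])"
    define Y1 where "Y1 = GI (replicate_mset n Top) b x"
    define Y2 where "Y2 = GI (replicate_mset n Top) Bot e"
    define Y3 where "Y3 = gimp Top e Bot"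
    have ax1: "deriv tn T (Imp A Y1)"
    proof -
      have "deriv tn T (Imp (conjs (map (\<lambda>i. gimp (replicate n Top ! i) (ts ! i) (as ! i))
              [0..<length (replicate n Top)] @ [GI (mset as) b r]))
             (GI (mset (replicate n Top)) b (luk_t (avg ts) r)))"
      proof (rule deriv.axiom, rule ax.transM1)
        show "replicate n Top \<noteq> []" using nne by simp
        show "length as = length (replicate n Top)" using n_def by simp
        show "length ts = length (replicate n Top)" using assms(4) ts_def n_def by simp
        show "\<forall>c\<in>set ts. unit_iv c" by (rule tsu)
        show "unit_iv r" using assms(10,11) by simp
      qed
      then show ?thesis unfolding A_def Y1_def D_def H_def x_def by simp
    qed
    have ax2: "deriv tn T (Imp (FAnd Y1 (gimp b g Bot)) Y2)"
      unfolding Y1_def Y2_def e_def mrep[symmetric]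
      by (rule deriv.axiom, rule ax.transM2) (use assms(3) nne xu gu in auto)
    have ax3: "deriv tn T (Imp Y2 Y3)"
      unfolding Y2_def Y3_def by (rule deriv.axiom, rule ax.topM) (use nne eu in auto)
    have ax4: "deriv tn T (FNot Y3)"
      unfolding Y3_def by (rule deriv.axiom, rule ax.inkons) (use epos eu in auto)
    define Ps where "Ps = map D [0..<n] @ [Imp A Y1, gimp b g Bot, Imp (FAnd Y1 (gimp b g Bot)) Y2, Imp Y2 Y3, FNot Y3]"
    have wA: "wf A"
    proof -
      have "\<forall>P\<in>set (map D [0..<n] @ [H]). wf P" using Dw H_def assms(3,10,11) by auto
      then show ?thesis unfolding A_def using wf_conjs[of "map D [0..<n] @ [H]"] by simp
    qed
    have wfs: "wf Y1" "wf Y2" "wf Y3" using nne xu eu unfolding Y1_def Y2_def Y3_def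
      by auto
    have wZ: "wf (gimp b g Bot)" using gu by simp
    have memb: "deriv tn T P \<and> wf P" if "P \<in> set Ps" for P
    proof -
      from that have "(\<exists>i<n. P = D i) \<or> P = Imp A Y1 \<or> P = gimp b g Bot \<or>
          P = Imp (FAnd Y1 (gimp b g Bot)) Y2 \<or> P = Imp Y2 Y3 \<or> P = FNot Y3"
        unfolding Ps_def by auto
      then show ?thesis
        using Di Dw ax1 ax2 ax3 ax4 Z wA wfs wZ by auto
    qed
    have Psne: "Ps \<noteq> []" unfolding Ps_def by simp
    have "deriv tn T (conjs Ps)"
      using conj_deriv[OF Psne] memb by blast
    moreover have "taut_inst (Imp (conjs Ps) (FNot H))"
    proof -
      have "wf (conjs Ps)" using wf_conjs[OF Psne] memb by blast
      moreover have "wf (FNot H)" using H_def assms(3,10,11) by simp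
      moreover have "feval v (Imp (conjs Ps) (FNot H))" for v
      proof (cases "feval v (conjs Ps)")
        case False then show ?thesis by simp
      next
        case True
        then have all: "\<forall>P\<in>set Ps. feval v P" using feval_conjs[OF Psne] by simp
        then have dall: "\<forall>i<n. feval v (D i)" unfolding Ps_def by auto
        have f: "feval v (Imp A Y1)" "feval v (gimp b g Bot)"
           "feval v (Imp (FAnd Y1 (gimp b g Bot)) Y2)" "feval v (Imp Y2 Y3)" "feval v (FNot Y3)"
          using all unfolding Ps_def by auto
        have "\<not> feval v H"
        proof
          assume h: "feval v H"
          have "feval v A" unfolding A_def
            using feval_conjs[of "map D [0..<n] @ [H]"] dall h by auto
          then show False using f by simp
        qed
        then show ?thesis by simp
      qed
      ultimately show ?thesis unfolding taut_inst_def by simp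
    qed
    ultimately show "deriv tn T (FNot (GI (mset as) b r))" using taut_mp H_def by metis
  }
qed

end
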